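(* Let $H=(W,F)$ be a graph, $xy$ a flat edge of $H$, and $B=(X,Y;E_{XY})$ a cobipartite graph disjoint from $H$ with $E_{XY}\neq\varnothing$. Let $G$ be the graph obtained by the augmentation of the edge $xy$ in $H$ using $B$, and let $D=(V,A)$ be a clique-acyclic orientation of $G$. Let $s_X,s_Y$ be the sinks of $D[X]$ and $D[Y]$ respectively, labelled so that $(s_X,s_Y)\notin A$. Let $U=Y\setminus N_G(s_X)$, let $S_U=\varnothing$ if $U=\varnothing$ and $S_U=\{s_U\}$ where $s_U$ is the sink of $D[U]$ otherwise, and let $Z=(V\setminus(X\cup Y))\cup\{s_X,s_Y\}\cup S_U$. Then $G[Z]$ is isomorphic to $H$, or to $H$ with the edge $xy$ deleted, or to $H$ plus an additional vertex whose neighborhood is $(N_H(y)\cup\{y\})\setminus\{x\}$.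
   Context: An edge of an undirected graph is flat if it is contained in no triangle. A cobipartite graph $B=(X,Y;E_{XY})$ has vertex set partitioned into two cliques $X$ and $Y$, with $E_{XY}$ the set of edges between $X$ and $Y$. The augmentation of a flat edge $xy$ in $H$ using $B$ builds a graph from $H$ and $B$ by removing $x$, $y$ (and the edge $xy$) from $H$, and adding all edges between $X$ and $N_H(x)\setminus\{y\}$ and all edges between $Y$ and $N_H(y)\setminus\{x\}$. $N_G(v)$ is the neighborhood of $v$ in $G$. An orientation orients each edge in exactly one direction; it is clique-acyclic if every clique has a sink, i.e. a vertex receiving an arc from every other vertex of the clique. The condition $(s_X,s_Y)\notin A$ means that if $s_X,s_Y$ are adjacent then the arc is $(s_Y,s_X)$. *)

theory Defs
  imports Main
begin

definition graph :: "'a set \<Rightarrow> 'a set set \<Rightarrow> bool" where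
  "graph V E \<longleftrightarrow> finite V \<and> (\<forall>e\<in>E. e \<subseteq> V \<and> card e = 2)"

definition nbhd :: "'a set \<Rightarrow> 'a set set \<Rightarrow> 'a \<Rightarrow> 'a set" where
  "nbhd V E v = {u\<in>V. u \<noteq> v \<and> {u, v} \<in> E}"

definition flat_edge :: "'a set \<Rightarrow> 'a set set \<Rightarrow> 'a \<Rightarrow> 'a \<Rightarrow> bool" where
  "flat_edge V E x y \<longleftrightarrow> x \<noteq> y \<and> {x, y} \<in> E \<and>
     \<not> (\<exists>w\<in>V. w \<noteq> x \<and> w \<noteq> y \<and> {x, w} \<in> E \<and> {y, w} \<in> E)"

definition clique_edges :: "'a set \<Rightarrow> 'a set set" where
  "clique_edges X = {{a, b} | a b. a \<in> X \<and> b \<in> X \<and> a \<noteq> b}"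

text \<open>Cobipartite graph B = (X, Y; E_XY): two disjoint cliques X, Y and edges E_XY between them.
  Its edge set is clique_edges X \<union> clique_edges Y \<union> E_XY.\<close>
definition cobipartite :: "'a set \<Rightarrow> 'a set \<Rightarrow> 'a set set \<Rightarrow> bool" where
  "cobipartite X Y EXY \<longleftrightarrow> finite X \<and> finite Y \<and> X \<inter> Y = {} \<and>
     EXY \<subseteq> {{a, b} | a b. a \<in> X \<and> b \<in> Y}"

definition aug_vertices :: "'a set \<Rightarrow> 'a \<Rightarrow> 'a \<Rightarrow> 'a set \<Rightarrow> 'a set \<Rightarrow> 'a set" where
  "aug_vertices V x y X Y = (V - {x, y}) \<union> X \<union> Y"

definition aug_edges :: "'a set \<Rightarrow> 'a set set \<Rightarrow> 'a \<Rightarrow> 'a \<Rightarrow> 'a set \<Rightarrow> 'a set \<Rightarrow> 'a set set \<Rightarrow> 'a set set" where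
  "aug_edges V E x y X Y EXY =
     {e \<in> E. x \<notin> e \<and> y \<notin> e} \<union> clique_edges X \<union> clique_edges Y \<union> EXY
     \<union> {{a, w} | a w. a \<in> X \<and> w \<in> nbhd V E x - {y}}
     \<union> {{b, w} | b w. b \<in> Y \<and> w \<in> nbhd V E y - {x}}"

definition orientation :: "'a set \<Rightarrow> 'a set set \<Rightarrow> ('a \<times> 'a) set \<Rightarrow> bool" where
  "orientation V E A \<longleftrightarrow>
     (\<forall>u v. (u, v) \<in> A \<longrightarrow> u \<in> V \<and> v \<in> V \<and> u \<noteq> v \<and> {u, v} \<in> E) \<and>
     (\<forall>u\<in>V. \<forall>v\<in>V. u \<noteq> v \<longrightarrow> {u, v} \<in> E \<longrightarrow> ((u, v) \<in> A \<longleftrightarrow> (v, u) \<notin> A))"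

definition is_clique :: "'a set \<Rightarrow> 'a set set \<Rightarrow> 'a set \<Rightarrow> bool" where
  "is_clique V E K \<longleftrightarrow> K \<subseteq> V \<and> (\<forall>u\<in>K. \<forall>v\<in>K. u \<noteq> v \<longrightarrow> {u, v} \<in> E)"

definition is_sink :: "('a \<times> 'a) set \<Rightarrow> 'a set \<Rightarrow> 'a \<Rightarrow> bool" where
  "is_sink A K v \<longleftrightarrow> v \<in> K \<and> (\<forall>u\<in>K. u \<noteq> v \<longrightarrow> (u, v) \<in> A)"

definition clique_acyclic :: "'a set \<Rightarrow> 'a set set \<Rightarrow> ('a \<times> 'a) set \<Rightarrow> bool" where
  "clique_acyclic V E A \<longleftrightarrow> orientation V E A \<and>
     (\<forall>K. is_clique V E K \<and> K \<noteq> {} \<longrightarrow> (\<exists>v. is_sink A K v))"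

definition induced_edges :: "'a set set \<Rightarrow> 'a set \<Rightarrow> 'a set set" where
  "induced_edges E Z = {e \<in> E. e \<subseteq> Z}"

definition graph_iso :: "'a set \<Rightarrow> 'a set set \<Rightarrow> 'b set \<Rightarrow> 'b set set \<Rightarrow> bool" where
  "graph_iso V1 E1 V2 E2 \<longleftrightarrow> (\<exists>f. bij_betw f V1 V2 \<and>
     (\<forall>u\<in>V1. \<forall>v\<in>V1. {u, v} \<in> E1 \<longleftrightarrow> {f u, f v} \<in> E2))"

definition add_vertex_vertices :: "'a set \<Rightarrow> 'a option set" where
  "add_vertex_vertices V = Some ` V \<union> {None}"

definition add_vertex_edges :: "'a set \<Rightarrow> 'a set set \<Rightarrow> 'a \<Rightarrow> 'a \<Rightarrow> 'a option set set" where
  "add_vertex_edges V E x y = (image Some) ` E \<union>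
     {{None, Some w} | w. w \<in> (nbhd V E y \<union> {y}) - {x}}"

end

theory Submission
  imports Defs
begin


lemma av_SS: "{Some u, Some v} \<in> add_vertex_edges W F x y \<longleftrightarrow> {u,v} \<in> F"
proof -
  have "{Some u, Some v} = Some ` {u,v}" by simp
  moreover have "\<And>e. Some ` e = Some ` {u,v} \<longleftrightarrow> e = {u,v}"
    by (metis inj_Some inj_image_eq_iff)
  moreover have "Some ` {u,v} \<notin> {{None, Some w} | w. w \<in> (nbhd W F y \<union> {y}) - {x}}"
    by auto
  ultimately show ?thesis unfolding add_vertex_edges_def
    by (metis (no_types, lifting) UnCI UnE image_iff)
qed

lemma av_NS: "{None, Some v} \<in> add_vertex_edges W F x y \<longleftrightarrow> v \<in> (nbhd W F y \<union> {y}) - {x}"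
  unfolding add_vertex_edges_def by (auto simp: doubleton_eq_iff)


locale S =
  fixes W :: "'a set" and F :: "'a set set" and x y :: 'a and X Y :: "'a set" and EXY
  assumes g: "graph W F" and cb: "cobipartite X Y EXY" and dj: "(X \<union> Y) \<inter> W = {}"
begin

lemma exy_mem: "{u,v} \<in> EXY \<Longrightarrow> u \<in> X \<union> Y"
  using cb unfolding cobipartite_def by (auto simp: doubleton_eq_iff)

lemma exy_mem2: "{u,v} \<in> EXY \<Longrightarrow> v \<in> X \<union> Y"
  using exy_mem[of v u] by (simp add: insert_commute)

lemma f_mem: "{u,v} \<in> F \<Longrightarrow> u \<in> W"
  using g unfolding graph_def by auto

lemma e_WW: assumes "u \<in> W - {x,y}" "v \<in> W - {x,y}"
  shows "{u,v} \<in> aug_edges W F x y X Y EXY \<longleftrightarrow> {u,v} \<in> F"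
  using assms g cb dj unfolding aug_edges_def clique_edges_def cobipartite_def graph_def
  by (auto simp: doubleton_eq_iff dest: exy_mem)

lemma e_XW: assumes "a \<in> X" "v \<in> W - {x,y}"
  shows "{a,v} \<in> aug_edges W F x y X Y EXY \<longleftrightarrow> {x,v} \<in> F"
  using assms g cb dj unfolding aug_edges_def clique_edges_def cobipartite_def graph_def nbhd_def
  by (auto simp: doubleton_eq_iff insert_commute dest: exy_mem exy_mem2 f_mem)

lemma e_YW: assumes "a \<in> Y" "v \<in> W - {x,y}"
  shows "{a,v} \<in> aug_edges W F x y X Y EXY \<longleftrightarrow> {y,v} \<in> F"
  using assms g cb dj unfolding aug_edges_def clique_edges_def cobipartite_def graph_def nbhd_def
  by (auto simp: doubleton_eq_iff insert_commute dest: exy_mem exy_mem2 f_mem)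

lemma e_XX: assumes "a \<in> X" "b \<in> X" "a \<noteq> b"
  shows "{a,b} \<in> aug_edges W F x y X Y EXY"
  using assms unfolding aug_edges_def clique_edges_def by blast

lemma e_YY: assumes "a \<in> Y" "b \<in> Y" "a \<noteq> b"
  shows "{a,b} \<in> aug_edges W F x y X Y EXY"
  using assms unfolding aug_edges_def clique_edges_def by blast

lemma e_WX: assumes "a \<in> X" "v \<in> W - {x,y}"
  shows "{v,a} \<in> aug_edges W F x y X Y EXY \<longleftrightarrow> {v,x} \<in> F"
  using e_XW[OF assms] by (simp add: insert_commute)

lemma e_WY: assumes "a \<in> Y" "v \<in> W - {x,y}"
  shows "{v,a} \<in> aug_edges W F x y X Y EXY \<longleftrightarrow> {v,y} \<in> F"
  using e_YW[OF assms] by (simp add: insert_commute)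

lemma no_single: "{u} \<notin> aug_edges W F x y X Y EXY"
  using g cb dj unfolding aug_edges_def clique_edges_def cobipartite_def graph_def nbhd_def
  apply (auto simp: doubleton_eq_iff)
  apply (drule subsetD, assumption) by auto

lemma no_singleF: "{u} \<notin> F"
  using g unfolding graph_def by fastforce

lemma iso12:
  assumes sX: "sX \<in> X" and sY: "sY \<in> Y" and xy: "x \<in> W" "y \<in> W" "x \<noteq> y"
    and F': "F' = (if {sX,sY} \<in> aug_edges W F x y X Y EXY then F else F - {{x,y}})"
    and xyF: "{x,y} \<in> F"
  shows "graph_iso (W - {x,y} \<union> {sX,sY}) (induced_edges (aug_edges W F x y X Y EXY) (W - {x,y} \<union> {sX,sY})) W F'"
proof -
  let ?E = "aug_edges W F x y X Y EXY"
  let ?Z = "W - {x,y} \<union> {sX,sY}"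
  define f where "f = (\<lambda>v. if v = sX then x else if v = sY then y else v)"
  have d: "sX \<notin> W" "sY \<notin> W" "sX \<noteq> sY" using sX sY dj cb unfolding cobipartite_def by auto
  have b: "bij_betw f ?Z W"
    unfolding bij_betw_def inj_on_def f_def using d xy by auto
  have c1: "{sY,sX} \<in> ?E \<longleftrightarrow> {sX,sY} \<in> ?E" by (simp add: insert_commute)
  have c2: "{y,x} = {x,y}" by (simp add: insert_commute)
  have e: "{u,v} \<in> induced_edges ?E ?Z \<longleftrightarrow> {f u, f v} \<in> F'" if "u \<in> ?Z" "v \<in> ?Z" for u v
  proof (cases "u = v")
    case True then show ?thesis using no_single no_singleF F' by (auto simp: induced_edges_def)
  next
    case False
    have "{u,v} \<in> induced_edges ?E ?Z \<longleftrightarrow> {u,v} \<in> ?E"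
      using that unfolding induced_edges_def by auto
    moreover have "{u,v} \<in> ?E \<longleftrightarrow> {f u, f v} \<in> F'"
      using that False d xyF
      by (auto simp: f_def F' e_WW e_XW e_YW e_WX e_WY c1 c2 doubleton_eq_iff sX sY)
    ultimately show ?thesis by simp
  qed
  show ?thesis unfolding graph_iso_def using b e by blast
qed

lemma iso3:
  assumes sX: "sX \<in> X" and sY: "sY \<in> Y" and sU: "sU \<in> Y" "sU \<noteq> sY"
    and xy: "x \<in> W" "y \<in> W" "x \<noteq> y" and xyF: "{x,y} \<in> F"
    and a1: "{sX,sY} \<in> aug_edges W F x y X Y EXY"
    and a2: "{sX,sU} \<notin> aug_edges W F x y X Y EXY"
  shows "graph_iso (W - {x,y} \<union> {sX,sY} \<union> {sU}) (induced_edges (aug_edges W F x y X Y EXY) (W - {x,y} \<union> {sX,sY} \<union> {sU})) (add_vertex_vertices W) (add_vertex_edges W F x y)"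
proof -
  let ?E = "aug_edges W F x y X Y EXY"
  let ?Z = "W - {x,y} \<union> {sX,sY} \<union> {sU}"
  define f where "f = (\<lambda>v. if v = sX then Some x else if v = sY then Some y else if v = sU then None else Some v)"
  have d: "sX \<notin> W" "sY \<notin> W" "sX \<noteq> sY" "sU \<notin> W" "sU \<noteq> sX" using sX sY sU dj cb unfolding cobipartite_def by auto
  have b: "bij_betw f ?Z (add_vertex_vertices W)"
    unfolding bij_betw_def inj_on_def f_def add_vertex_vertices_def using d xy sU
    by (auto simp: image_iff)
  have c1: "{sY,sX} \<in> ?E" "{sU,sX} \<notin> ?E" using a1 a2 by (simp_all add: insert_commute)
  have c2: "{y,x} \<in> F" using xyF by (simp add: insert_commute)
  have c3: "{sU,sY} \<in> ?E" "{sY,sU} \<in> ?E" using e_YY sU sY by auto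
  have av_SN: "\<And>v. {Some v, None} \<in> add_vertex_edges W F x y \<longleftrightarrow> v \<in> (nbhd W F y \<union> {y}) - {x}"
    using av_NS by (metis insert_commute)
  have nb: "\<And>v. v \<in> W - {x,y} \<Longrightarrow> v \<in> nbhd W F y \<longleftrightarrow> {v,y} \<in> F"
    unfolding nbhd_def by auto
  have cy: "\<And>v. {y,v} \<in> F \<longleftrightarrow> {v,y} \<in> F" by (simp add: insert_commute)
  have e: "{u,v} \<in> induced_edges ?E ?Z \<longleftrightarrow> {f u, f v} \<in> add_vertex_edges W F x y" if "u \<in> ?Z" "v \<in> ?Z" for u v
  proof (cases "u = v")
    case True
    have "{z} \<notin> add_vertex_edges W F x y" for z
    proof (cases z)
      case None then show ?thesis unfolding add_vertex_edges_def by auto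
    next
      case (Some w) then show ?thesis using av_SS[of w w W F x y] no_singleF by simp
    qed
    with \<open>u = v\<close> show ?thesis using no_single
      by (auto simp: induced_edges_def)
  next
    case False
    have "{u,v} \<in> induced_edges ?E ?Z \<longleftrightarrow> {u,v} \<in> ?E"
      using that unfolding induced_edges_def by auto
    moreover have "{u,v} \<in> ?E \<longleftrightarrow> {f u, f v} \<in> add_vertex_edges W F x y"
      using that False d xyF a1 a2 c1 c2 c3 xy
      by (auto simp: f_def e_WW e_XW e_YW e_WX e_WY av_SS av_NS av_SN nb cy sX sY sU)
    ultimately show ?thesis by simp
  qed
  show ?thesis unfolding graph_iso_def using b e by blast
qed

end


theorem lemma2:
  fixes W :: "'a set" and F :: "'a set set" and x y :: 'a
    and X Y :: "'a set" and EXY :: "'a set set" and A :: "('a \<times> 'a) set"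
    and sX sY :: 'a
  assumes "graph W F"
    and "flat_edge W F x y"
    and "cobipartite X Y EXY"
    and "(X \<union> Y) \<inter> W = {}"
    and "EXY \<noteq> {}"
    and "clique_acyclic (aug_vertices W x y X Y) (aug_edges W F x y X Y EXY) A"
    and "is_sink A X sX" and "is_sink A Y sY"
    and "(sX, sY) \<notin> A"
  shows
    "let V = aug_vertices W x y X Y; E = aug_edges W F x y X Y EXY;
         U = Y - nbhd V E sX;
         SU = (if U = {} then {} else {THE s. is_sink A U s});
         Z = (V - (X \<union> Y)) \<union> {sX, sY} \<union> SU
     in graph_iso Z (induced_edges E Z) W F
      \<or> graph_iso Z (induced_edges E Z) W (F - {{x, y}})
      \<or> graph_iso Z (induced_edges E Z) (add_vertex_vertices W) (add_vertex_edges W F x y)"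
proof -
  interpret S W F x y X Y EXY using assms(1,3,4) by unfold_locales
  define V where "V = aug_vertices W x y X Y"
  define E where "E = aug_edges W F x y X Y EXY"
  define U where "U = Y - nbhd V E sX"
  have xy: "x \<in> W" "y \<in> W" "x \<noteq> y" "{x,y} \<in> F"
    using assms(1,2) unfolding flat_edge_def graph_def by auto
  have ori: "orientation V E A" and ca: "\<And>K. is_clique V E K \<Longrightarrow> K \<noteq> {} \<Longrightarrow> \<exists>v. is_sink A K v"
    using assms(6) unfolding clique_acyclic_def V_def E_def by auto
  have sX: "sX \<in> X" and sY: "sY \<in> Y" using assms(7,8) unfolding is_sink_def by auto
  have dXY: "X \<inter> Y = {}" using assms(3) unfolding cobipartite_def by auto
  have asym: "\<And>u v. (u,v) \<in> A \<Longrightarrow> (v,u) \<in> A \<Longrightarrow> False"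
    using ori unfolding orientation_def by metis
  have suniq: "\<And>K s t. is_sink A K s \<Longrightarrow> is_sink A K t \<Longrightarrow> s = t"
    using asym unfolding is_sink_def by metis
  have VZ: "V - (X \<union> Y) = W - {x,y}"
    unfolding V_def aug_vertices_def using assms(4) by auto
  have YV: "Y \<subseteq> V" unfolding V_def aug_vertices_def by auto
  have Umem: "\<And>u. u \<in> U \<longleftrightarrow> u \<in> Y \<and> {u,sX} \<notin> E"
    unfolding U_def nbhd_def using YV sX dXY by auto
  have Eswap: "\<And>a b. {a,b} \<in> E \<longleftrightarrow> {b,a} \<in> E" by (simp add: insert_commute)
  define SU where "SU = (if U = {} then {} else {THE s. is_sink A U s})"
  define Z where "Z = (V - (X \<union> Y)) \<union> {sX, sY} \<union> SU"
  have R: "graph_iso Z (induced_edges E Z) W F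
      \<or> graph_iso Z (induced_edges E Z) W (F - {{x, y}})
      \<or> graph_iso Z (induced_edges E Z) (add_vertex_vertices W) (add_vertex_edges W F x y)"
  proof (cases "U = {}")
    case True
    then have a: "{sX,sY} \<in> E" using Umem sY Eswap by blast
    have "graph_iso (W - {x,y} \<union> {sX,sY}) (induced_edges E (W - {x,y} \<union> {sX,sY})) W F"
      using iso12[OF sX sY xy(1,2,3) _ xy(4), of F] a unfolding E_def by simp
    then show ?thesis using True by (simp add: Z_def SU_def VZ)
  next
    case False
    have cl: "is_clique V E U" unfolding is_clique_def
      using YV Umem e_YY unfolding E_def by blast
    obtain s where s: "is_sink A U s" using ca[OF cl False] by blast
    have th: "(THE s. is_sink A U s) = s" using s suniq by blast
    have sU: "s \<in> Y" "{s,sX} \<notin> E" using s Umem unfolding is_sink_def by auto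
    show ?thesis
    proof (cases "{sX,sY} \<in> E")
      case True
      have "s \<noteq> sY" using sU True Eswap by blast
      then have "graph_iso (W - {x,y} \<union> {sX,sY} \<union> {s}) (induced_edges E (W - {x,y} \<union> {sX,sY} \<union> {s})) (add_vertex_vertices W) (add_vertex_edges W F x y)"
        using iso3[OF sX sY sU(1) _ xy] True sU(2) Eswap unfolding E_def by blast
      then show ?thesis using False th by (simp add: Z_def SU_def VZ)
    next
      case F2: False
      have "sY \<in> U" using Umem sY F2 Eswap by blast
      have "s = sY"
      proof (rule ccontr)
        assume ne: "s \<noteq> sY"
        have "(s,sY) \<in> A" using assms(8) sU ne unfolding is_sink_def by auto
        moreover have "(sY,s) \<in> A" using s \<open>sY \<in> U\<close> ne unfolding is_sink_def by auto
        ultimately show False using asym by blast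
      qed
      have "graph_iso (W - {x,y} \<union> {sX,sY}) (induced_edges E (W - {x,y} \<union> {sX,sY})) W (F - {{x,y}})"
        using iso12[OF sX sY xy(1,2,3) _ xy(4), of "F - {{x,y}}"] F2 unfolding E_def by simp
      moreover have "W - {x,y} \<union> {sX,sY} \<union> {s} = W - {x,y} \<union> {sX,sY}" using \<open>s = sY\<close> by auto
      ultimately show ?thesis using False th by (simp add: Z_def SU_def VZ)
    qed
  qed
  then show ?thesis
    by (simp only: Let_def V_def[symmetric] E_def[symmetric] U_def[symmetric] SU_def[symmetric] Z_def[symmetric])
qed

end
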